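(* Consider the secure distributed linearly separable computation problem with parameters $(\mathsf K,\mathsf N,\mathsf N_{\rm r},\mathsf K_{\rm c},\mathsf M)$ where $\mathsf K_{\rm c}=1$ and $\mathsf M=\frac{\mathsf K}{\mathsf N}(\mathsf N-\mathsf N_{\rm r}+1)$. Then the optimal communication cost is $\mathsf R^\star=\mathsf N_{\rm r}$.
   Context: Problem setting. $\mathsf K,\mathsf N,\mathsf N_{\rm r},\mathsf M$ are positive integers with $\mathsf N_{\rm r}\le \mathsf N$ and $\mathsf N$ dividing $\mathsf K$. Fix a prime power $\mathsf q$ (assumed sufficiently large) and a positive integer $\mathsf L$. There are $\mathsf K$ independent datasets $D_1,\dots,D_{\mathsf K}$; the message $W_k=f_k(D_k)\in\mathbb F_{\mathsf q}^{\mathsf L}$, and $W_1,\dots,W_{\mathsf K}$ are mutually independent, each uniformly distributed over $\mathbb F_{\mathsf q}^{\mathsf L}$. Since $\mathsf K_{\rm c}=1$, the user wants $W_1+\cdots+W_{\mathsf K}$. A (secure) scheme consists of: (i) an assignment $\mathbf Z=(\mathcal Z_1,\dots,\mathcal Z_{\mathsf N})$ with $\mathcal Z_n\subseteq[\mathsf K]$ and $|\mathcal Z_n|\le \mathsf M$ (server $n$ receives the datasets indexed by $\mathcal Z_n$); (ii) a random variable $Q$ on a finite set, independent of $(D_1,\dots,D_{\mathsf K})$, given to every server but not to the user; (iii) each server $n$ sends $X_n=\psi_n(\{W_k:k\in\mathcal Z_n\},Q)\in\mathbb F_{\mathsf q}^{\mathsf T_n}$; (iv) decodability: for every $\mathcal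 A\subseteq[\mathsf N]$ with $|\mathcal A|=\mathsf N_{\rm r}$ there is a function $\phi_{\mathcal A}$ with $\phi_{\mathcal A}(\{X_n:n\in\mathcal A\})=W_1+\cdots+W_{\mathsf K}$; (v) security: $I(W_1,\dots,W_{\mathsf K};X_1,\dots,X_{\mathsf N}\mid W_1+\cdots+W_{\mathsf K})=0$. The communication cost is $\mathsf R=\max_{\mathcal A\subseteq[\mathsf N],|\mathcal A|=\mathsf N_{\rm r}}\sum_{n\in\mathcal A}\mathsf T_n/\mathsf L$, and $\mathsf R^\star$ is the minimum of $\mathsf R$ over all such secure schemes. *)

theory Defs
  imports "HOL-Probability.Probability_Mass_Function" "HOL-Algebra.Ring"
begin

text \<open>The finite field F_q is an HOL-Algebra field R with finite carrier
  (carrier taken inside nat; every finite field is isomorphic to such an R).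
  Server indices are 1..N, dataset/message indices are 1..K.
  A message tuple (W_1,...,W_K) is w :: nat => nat => nat, where w k l is the
  l-th coordinate (l < L) of W_k.\<close>

definition msg_space :: "nat ring \<Rightarrow> nat \<Rightarrow> nat \<Rightarrow> (nat \<Rightarrow> nat \<Rightarrow> nat) set" where
  "msg_space R K L = PiE {1..K} (\<lambda>_. PiE {..<L} (\<lambda>_. carrier R))"

definition msg_sum :: "nat ring \<Rightarrow> nat \<Rightarrow> nat \<Rightarrow> (nat \<Rightarrow> nat \<Rightarrow> nat) \<Rightarrow> (nat \<Rightarrow> nat)" where
  "msg_sum R K L w = (\<lambda>l\<in>{..<L}. finsum R (\<lambda>k. w k l) {1..K})"

definition cond_mutual_info :: "('a \<times> 'b \<times> 'c) pmf \<Rightarrow> real" where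
  "cond_mutual_info P =
     (let PC = map_pmf (\<lambda>(a,b,c). c) P;
          PAC = map_pmf (\<lambda>(a,b,c). (a,c)) P;
          PBC = map_pmf (\<lambda>(a,b,c). (b,c)) P
      in \<Sum>(a,b,c)\<in>set_pmf P.
           pmf P (a,b,c) *
           log 2 (pmf P (a,b,c) * pmf PC c / (pmf PAC (a,c) * pmf PBC (b,c))))"

text \<open>A secure scheme: assignment Z, lengths T, common randomness Q (a finitely
  supported distribution independent of the messages) and encoders psi, where
  psi n w q is X_n (a vector in F_q^(T n), as a list).\<close>
definition secure_scheme ::
  "nat ring \<Rightarrow> nat \<Rightarrow> nat \<Rightarrow> nat \<Rightarrow> nat \<Rightarrow> nat \<Rightarrow>
   (nat \<Rightarrow> nat set) \<Rightarrow> (nat \<Rightarrow> nat) \<Rightarrow> nat pmf \<Rightarrow>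
   (nat \<Rightarrow> (nat \<Rightarrow> nat \<Rightarrow> nat) \<Rightarrow> nat \<Rightarrow> nat list) \<Rightarrow> bool" where
  "secure_scheme R K N Nr M L Z T Q \<psi> \<longleftrightarrow>
     \<comment> \<open>(i) assignment\<close>
     (\<forall>n\<in>{1..N}. Z n \<subseteq> {1..K} \<and> card (Z n) \<le> M) \<and>
     \<comment> \<open>(ii) finitely supported randomness\<close>
     finite (set_pmf Q) \<and>
     \<comment> \<open>(iii) X_n lies in F_q^(T n) and depends only on W_k (k in Z n) and Q\<close>
     (\<forall>n\<in>{1..N}. \<forall>w\<in>msg_space R K L. \<forall>q\<in>set_pmf Q.
        length (\<psi> n w q) = T n \<and> set (\<psi> n w q) \<subseteq> carrier R) \<and>
     (\<forall>n\<in>{1..N}. \<forall>w\<in>msg_space R K L. \<forall>w'\<in>msg_space R K L. \<forall>q\<in>set_pmf Q.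
        (\<forall>k\<in>Z n. w k = w' k) \<longrightarrow> \<psi> n w q = \<psi> n w' q) \<and>
     \<comment> \<open>(iv) decodability from any Nr servers\<close>
     (\<forall>A. A \<subseteq> {1..N} \<and> card A = Nr \<longrightarrow>
        (\<exists>\<phi>. \<forall>w\<in>msg_space R K L. \<forall>q\<in>set_pmf Q.
           \<phi> (\<lambda>n\<in>A. \<psi> n w q) = msg_sum R K L w)) \<and>
     \<comment> \<open>(v) security: I(W_1..W_K ; X_1..X_N | W_1+...+W_K) = 0\<close>
     cond_mutual_info
       (map_pmf (\<lambda>(w,q). (w, (\<lambda>n\<in>{1..N}. \<psi> n w q), msg_sum R K L w))
          (pair_pmf (pmf_of_set (msg_space R K L)) Q)) = 0"

definition comm_cost :: "nat \<Rightarrow> nat \<Rightarrow> nat \<Rightarrow> (nat \<Rightarrow> nat) \<Rightarrow> real" where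
  "comm_cost N Nr L T =
     Max {(\<Sum>n\<in>A. real (T n)) / real L | A. A \<subseteq> {1..N} \<and> card A = Nr}"

text \<open>The set of achievable communication costs; R* is its least element.\<close>
definition achievable_costs ::
  "nat ring \<Rightarrow> nat \<Rightarrow> nat \<Rightarrow> nat \<Rightarrow> nat \<Rightarrow> nat \<Rightarrow> real set" where
  "achievable_costs R K N Nr M L =
     {comm_cost N Nr L T | Z T Q \<psi>. secure_scheme R K N Nr M L Z T Q \<psi>}"

end

theory Submission
  imports Defs
begin

lemma pmf_map_fin:
  assumes "finite (set_pmf p)"
  shows "pmf (map_pmf g p) y = (\<Sum>x\<in>set_pmf p. if g x = y then pmf p x else 0)"
proof -
  have "pmf (map_pmf g p) y = measure p (g -` {y} \<inter> set_pmf p)"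
    by (simp add: pmf_map measure_Int_set_pmf)
  also have "\<dots> = sum (pmf p) (g -` {y} \<inter> set_pmf p)"
    using assms by (simp add: measure_measure_pmf_finite)
  also have "\<dots> = (\<Sum>x\<in>set_pmf p. if g x = y then pmf p x else 0)"
    using assms by (simp add: sum.If_cases Int_commute vimage_def Collect_conj_eq[symmetric] Int_def)
  finally show ?thesis .
qed

lemma pmf_map_pair_fin:
  assumes "finite Ws" "Ws \<noteq> {}" "finite (set_pmf Q)"
  shows "pmf (map_pmf g (pair_pmf (pmf_of_set Ws) Q)) y =
    (\<Sum>w\<in>Ws. \<Sum>q\<in>set_pmf Q. if g (w,q) = y then pmf Q q / real (card Ws) else 0)"
proof -
  have s: "set_pmf (pair_pmf (pmf_of_set Ws) Q) = Ws \<times> set_pmf Q"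
    using assms by (simp add: set_pair_pmf)
  have "pmf (map_pmf g (pair_pmf (pmf_of_set Ws) Q)) y =
     (\<Sum>x\<in>Ws \<times> set_pmf Q. if g x = y then pmf (pair_pmf (pmf_of_set Ws) Q) x else 0)"
    using assms by (subst pmf_map_fin) (simp_all add: s)
  also have "\<dots> = (\<Sum>w\<in>Ws. \<Sum>q\<in>set_pmf Q. if g (w,q) = y then pmf (pair_pmf (pmf_of_set Ws) Q) (w,q) else 0)"
    by (simp add: sum.cartesian_product)
  also have "\<dots> = (\<Sum>w\<in>Ws. \<Sum>q\<in>set_pmf Q. if g (w,q) = y then pmf Q q / real (card Ws) else 0)"
    using assms by (intro sum.cong refl) (simp add: pmf_pair)
  finally show ?thesis .
qed

lemma sec_general:
  fixes Ws :: "'w set" and Q :: "'q pmf" and X :: "'w \<Rightarrow> 'q \<Rightarrow> 'x" and S :: "'w \<Rightarrow> 's"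
  assumes fin: "finite Ws" and ne: "Ws \<noteq> {}" and fQ: "finite (set_pmf Q)"
    and indep: "\<And>w w'. w\<in>Ws \<Longrightarrow> w'\<in>Ws \<Longrightarrow> S w = S w' \<Longrightarrow> map_pmf (X w) Q = map_pmf (X w') Q"
  shows "cond_mutual_info (map_pmf (\<lambda>(w,q). (w, X w q, S w)) (pair_pmf (pmf_of_set Ws) Q)) = 0"
proof -
  define U where "U = pair_pmf (pmf_of_set Ws) Q"
  define P where "P = map_pmf (\<lambda>(w,q). (w, X w q, S w)) U"
  define n where "n = real (card Ws)"
  have npos: "n > 0" using fin ne by (simp add: n_def card_gt_0_iff)
  define H where "H w b = pmf (map_pmf (X w) Q) b" for w b
  have H: "H w b = (\<Sum>q\<in>set_pmf Q. if X w q = b then pmf Q q else 0)" for w b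
    unfolding H_def using fQ by (rule pmf_map_fin)
  have sumQ: "(\<Sum>q\<in>set_pmf Q. pmf Q q) = 1"
    using fQ by (simp add: sum_pmf_eq_1)
  have pm: "pmf (map_pmf g U) y = (\<Sum>w\<in>Ws. \<Sum>q\<in>set_pmf Q. if g (w,q) = y then pmf Q q / n else 0)"
    for g :: "'w \<times> 'q \<Rightarrow> 'z" and y
    unfolding U_def n_def using fin ne fQ by (rule pmf_map_pair_fin)
  have P1: "pmf P (a,b,c) = (if a \<in> Ws \<and> S a = c then H a b / n else 0)" for a b c
  proof -
    have "pmf P (a,b,c) = (\<Sum>w\<in>Ws. if w = a \<and> S w = c then (\<Sum>q\<in>set_pmf Q. if X w q = b then pmf Q q else 0) / n else 0)"
      unfolding P_def pm by (intro sum.cong refl) (auto simp: sum_divide_distrib intro!: sum.cong sum.neutral)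
    also have "\<dots> = (\<Sum>w\<in>Ws. if w = a then (if S a = c then H a b / n else 0) else 0)"
      by (intro sum.cong refl) (auto simp: H)
    also have "\<dots> = (if a \<in> Ws \<and> S a = c then H a b / n else 0)"
      using fin by (simp add: sum.delta)
    finally show ?thesis .
  qed
  have PC: "pmf (map_pmf (\<lambda>(a,b,c). c) P) c = real (card {w\<in>Ws. S w = c}) / n" for c
  proof -
    have "pmf (map_pmf (\<lambda>(a,b,c). c) P) c = (\<Sum>w\<in>Ws. if S w = c then (\<Sum>q\<in>set_pmf Q. pmf Q q) / n else 0)"
      unfolding P_def map_pmf_comp pm by (intro sum.cong refl) (auto simp: sum_divide_distrib)
    also have "\<dots> = real (card {w\<in>Ws. S w = c}) / n"
      using fin by (simp add: sumQ sum.If_cases Int_def conj_commute)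
    finally show ?thesis .
  qed
  have PAC: "pmf (map_pmf (\<lambda>(a,b,c). (a,c)) P) (a,c) = (if a \<in> Ws \<and> S a = c then 1 / n else 0)" for a c
  proof -
    have "pmf (map_pmf (\<lambda>(a,b,c). (a,c)) P) (a,c) = (\<Sum>w\<in>Ws. if w = a \<and> S w = c then (\<Sum>q\<in>set_pmf Q. pmf Q q) / n else 0)"
      unfolding P_def map_pmf_comp pm by (intro sum.cong refl) (auto simp: sum_divide_distrib intro!: sum.neutral)
    also have "\<dots> = (\<Sum>w\<in>Ws. if w = a then (if S a = c then 1 / n else 0) else 0)"
      by (intro sum.cong refl) (auto simp: sumQ)
    also have "\<dots> = (if a \<in> Ws \<and> S a = c then 1 / n else 0)"
      using fin by (simp add: sum.delta)
    finally show ?thesis .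
  qed
  have PBC: "pmf (map_pmf (\<lambda>(a,b,c). (b,c)) P) (b,c) = (\<Sum>w\<in>Ws. if S w = c then H w b / n else 0)" for b c
    unfolding P_def map_pmf_comp pm H by (intro sum.cong refl) (auto simp: sum_divide_distrib intro!: sum.cong)
  have term0: "pmf P (a,b,c) * log 2 (pmf P (a,b,c) * pmf (map_pmf (\<lambda>(a,b,c). c) P) c /
       (pmf (map_pmf (\<lambda>(a,b,c). (a,c)) P) (a,c) * pmf (map_pmf (\<lambda>(a,b,c). (b,c)) P) (b,c))) = 0"
    if "(a,b,c) \<in> set_pmf P" for a b c
  proof -
    have pos: "pmf P (a,b,c) > 0" using that by (simp add: pmf_positive)
    then have a: "a \<in> Ws" "S a = c" and Hpos: "H a b / n > 0" by (auto simp: P1 split: if_splits)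
    have HH: "H w b = H a b" if "w \<in> Ws" "S w = c" for w
      unfolding H_def using indep[OF that(1) a(1)] that a by simp
    have "pmf (map_pmf (\<lambda>(a,b,c). (b,c)) P) (b,c) = (\<Sum>w\<in>Ws. if S w = c then H a b / n else 0)"
      unfolding PBC by (intro sum.cong refl) (auto simp: HH)
    also have "\<dots> = real (card {w\<in>Ws. S w = c}) * (H a b / n)"
      using fin by (simp add: sum.If_cases Int_def conj_commute)
    finally have PBC': "pmf (map_pmf (\<lambda>(a,b,c). (b,c)) P) (b,c) = real (card {w\<in>Ws. S w = c}) * (H a b / n)" .
    have cpos: "card {w\<in>Ws. S w = c} > 0" using fin a by (auto simp: card_gt_0_iff)
    have "pmf P (a,b,c) * pmf (map_pmf (\<lambda>(a,b,c). c) P) c /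
       (pmf (map_pmf (\<lambda>(a,b,c). (a,c)) P) (a,c) * pmf (map_pmf (\<lambda>(a,b,c). (b,c)) P) (b,c)) = 1"
      using a npos Hpos cpos unfolding P1 PC PAC PBC' by (simp add: field_simps)
    then show ?thesis by (simp only: log_one mult_zero_right)
  qed
  show ?thesis
    unfolding cond_mutual_info_def Let_def P_def[symmetric] U_def[symmetric]
  proof (intro sum.neutral ballI)
    fix x assume x: "x \<in> set_pmf P"
    obtain a b c where xe: "x = (a,b,c)" by (cases x) auto
    show "(case x of (a, b, c) \<Rightarrow> pmf P (a, b, c) * log 2 (pmf P (a, b, c) * pmf (map_pmf (\<lambda>(a, b, c). c) P) c /
       (pmf (map_pmf (\<lambda>(a, b, c). (a, c)) P) (a, c) * pmf (map_pmf (\<lambda>(a, b, c). (b, c)) P) (b, c)))) = 0"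
      using term0[of a b c] x unfolding xe by (simp only: prod.case)
  qed
qed


locale nfield = field R for R :: "nat ring" (structure)

fun pl :: "nat ring \<Rightarrow> nat \<Rightarrow> (nat \<Rightarrow> nat) \<Rightarrow> bool" where
  "pl R 0 f = (\<exists>c\<in>carrier R. \<forall>x\<in>carrier R. f x = c)"
| "pl R (Suc k) f = (\<forall>a\<in>carrier R. \<exists>g. \<exists>c\<in>carrier R. pl R k g \<and>
      (\<forall>x\<in>carrier R. f x = (x \<ominus>\<^bsub>R\<^esub> a) \<otimes>\<^bsub>R\<^esub> g x \<oplus>\<^bsub>R\<^esub> c))"

context nfield
begin

lemma minus_zero_eq: "a \<in> carrier R \<Longrightarrow> b \<in> carrier R \<Longrightarrow> a \<ominus> b = \<zero> \<Longrightarrow> a = b"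
proof -
  assume ab: "a \<in> carrier R" "b \<in> carrier R" and e: "a \<ominus> b = \<zero>"
  have "a = (a \<ominus> b) \<oplus> b" using ab by algebra
  then show ?thesis using e ab by simp
qed

lemma pl_closed: "pl R k f \<Longrightarrow> x \<in> carrier R \<Longrightarrow> f x \<in> carrier R"
proof (induction k arbitrary: f)
  case 0 then show ?case by auto
next
  case (Suc k)
  have "\<forall>a\<in>carrier R. \<exists>g. \<exists>c\<in>carrier R. pl R k g \<and> (\<forall>x\<in>carrier R. f x = (x \<ominus> a) \<otimes> g x \<oplus> c)"
    using Suc.prems(1) by (simp only: pl.simps(2))
  then obtain g c where g: "pl R k g" "c \<in> carrier R" "\<forall>x\<in>carrier R. f x = (x \<ominus> \<zero>) \<otimes> g x \<oplus> c"
    using zero_closed by blast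
  then show ?case using Suc.IH[OF g(1)] Suc.prems(2) by simp
qed

lemma pl_cong: "pl R k f \<Longrightarrow> (\<And>x. x \<in> carrier R \<Longrightarrow> f x = g x) \<Longrightarrow> pl R k g"
  by (cases k) auto

lemma pl_const: "c \<in> carrier R \<Longrightarrow> pl R k (\<lambda>_. c)"
proof (induction k arbitrary: c)
  case 0 then show ?case by auto
next
  case (Suc k)
  show ?case
  proof (simp only: pl.simps(2), intro ballI, intro exI bexI conjI)
    fix a assume a: "a \<in> carrier R"
    show "pl R k (\<lambda>_. \<zero>)" using Suc.IH[of \<zero>] by simp
    show "\<forall>x\<in>carrier R. c = (x \<ominus> a) \<otimes> \<zero> \<oplus> c" using a Suc.prems by simp
  qed (use Suc.prems in simp)
qed

lemma pl_add: "pl R k f \<Longrightarrow> pl R k g \<Longrightarrow> pl R k (\<lambda>x. f x \<oplus> g x)"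
proof (induction k arbitrary: f g)
  case 0
  then obtain c d where "c \<in> carrier R" "d \<in> carrier R" "\<forall>x\<in>carrier R. f x = c" "\<forall>x\<in>carrier R. g x = d"
    by auto
  then show ?case by (auto intro!: bexI[of _ "c \<oplus> d"])
next
  case (Suc k)
  show ?case
  proof (simp only: pl.simps(2), intro ballI)
    fix a assume a: "a \<in> carrier R"
    obtain g1 c1 where g1: "pl R k g1" "c1 \<in> carrier R" "\<forall>x\<in>carrier R. f x = (x \<ominus> a) \<otimes> g1 x \<oplus> c1"
      using Suc.prems(1) a by auto
    obtain g2 c2 where g2: "pl R k g2" "c2 \<in> carrier R" "\<forall>x\<in>carrier R. g x = (x \<ominus> a) \<otimes> g2 x \<oplus> c2"
      using Suc.prems(2) a by auto
    show "\<exists>h. \<exists>c\<in>carrier R. pl R k h \<and> (\<forall>x\<in>carrier R. f x \<oplus> g x = (x \<ominus> a) \<otimes> h x \<oplus> c)"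
    proof (intro exI bexI conjI ballI)
      show "pl R k (\<lambda>x. g1 x \<oplus> g2 x)" using Suc.IH g1 g2 by blast
      show "c1 \<oplus> c2 \<in> carrier R" using g1 g2 by simp
      fix x assume x: "x \<in> carrier R"
      have "g1 x \<in> carrier R" "g2 x \<in> carrier R" using pl_closed[OF g1(1) x] pl_closed[OF g2(1) x] by auto
      then show "f x \<oplus> g x = (x \<ominus> a) \<otimes> (g1 x \<oplus> g2 x) \<oplus> (c1 \<oplus> c2)"
        using g1(2,3) g2(2,3) x a by simp algebra
    qed
  qed
qed

lemma pl_smult: "c \<in> carrier R \<Longrightarrow> pl R k f \<Longrightarrow> pl R k (\<lambda>x. c \<otimes> f x)"
proof (induction k arbitrary: f)
  case 0
  then obtain d where "d \<in> carrier R" "\<forall>x\<in>carrier R. f x = d" by auto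
  then show ?case using 0 by (auto intro!: bexI[of _ "c \<otimes> d"])
next
  case (Suc k)
  show ?case
  proof (simp only: pl.simps(2), intro ballI)
    fix a assume a: "a \<in> carrier R"
    obtain g1 c1 where g1: "pl R k g1" "c1 \<in> carrier R" "\<forall>x\<in>carrier R. f x = (x \<ominus> a) \<otimes> g1 x \<oplus> c1"
      using Suc.prems(2) a by auto
    show "\<exists>h. \<exists>d\<in>carrier R. pl R k h \<and> (\<forall>x\<in>carrier R. c \<otimes> f x = (x \<ominus> a) \<otimes> h x \<oplus> d)"
    proof (intro exI bexI conjI ballI)
      show "pl R k (\<lambda>x. c \<otimes> g1 x)" using Suc.IH Suc.prems g1 by blast
      show "c \<otimes> c1 \<in> carrier R" using g1 Suc.prems by simp
      fix x assume x: "x \<in> carrier R"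
      have "g1 x \<in> carrier R" using pl_closed[OF g1(1) x] by auto
      then show "c \<otimes> f x = (x \<ominus> a) \<otimes> (c \<otimes> g1 x) \<oplus> c \<otimes> c1"
        using g1(2,3) x a Suc.prems(1) by simp algebra
    qed
  qed
qed

lemma pl_sub: "pl R k f \<Longrightarrow> pl R k g \<Longrightarrow> pl R k (\<lambda>x. f x \<ominus> g x)"
proof -
  assume f: "pl R k f" and g: "pl R k g"
  have "pl R k (\<lambda>x. f x \<oplus> (\<ominus> \<one>) \<otimes> g x)"
    by (intro pl_add f pl_smult g) simp
  then show ?thesis
  proof (rule pl_cong)
    fix x assume x: "x \<in> carrier R"
    have "f x \<in> carrier R" "g x \<in> carrier R" using pl_closed[OF f x] pl_closed[OF g x] by auto
    then show "f x \<oplus> (\<ominus> \<one>) \<otimes> g x = f x \<ominus> g x" by algebra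
  qed
qed

lemma pl_mono: "pl R k f \<Longrightarrow> pl R (Suc k) f"
proof (induction k arbitrary: f)
  case 0
  then obtain d where d: "d \<in> carrier R" "\<forall>x\<in>carrier R. f x = d" by auto
  show ?case
  proof (simp only: pl.simps(2), intro ballI, intro exI bexI conjI)
    fix a assume a: "a \<in> carrier R"
    show "pl R 0 (\<lambda>_. \<zero>)" by auto
    show "\<forall>x\<in>carrier R. f x = (x \<ominus> a) \<otimes> \<zero> \<oplus> d" using d a by simp
  qed (use d in simp)
next
  case (Suc k)
  have H: "\<forall>a\<in>carrier R. \<exists>g. \<exists>c\<in>carrier R. pl R (Suc k) g \<and> (\<forall>x\<in>carrier R. f x = (x \<ominus> a) \<otimes> g x \<oplus> c)"
  proof (intro ballI)
    fix a assume a: "a \<in> carrier R"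
    obtain g1 c1 where g1: "pl R k g1" "c1 \<in> carrier R" "\<forall>x\<in>carrier R. f x = (x \<ominus> a) \<otimes> g1 x \<oplus> c1"
      using Suc.prems a by auto
    then show "\<exists>g. \<exists>c\<in>carrier R. pl R (Suc k) g \<and> (\<forall>x\<in>carrier R. f x = (x \<ominus> a) \<otimes> g x \<oplus> c)"
      using Suc.IH by blast
  qed
  show ?case by (subst pl.simps(2)) (rule H)
qed

lemma pl_mono_le: "k \<le> k' \<Longrightarrow> pl R k f \<Longrightarrow> pl R k' f"
proof (induction k' rule: dec_induct)
  case base then show ?case by simp
next
  case (step n) then show ?case using pl_mono by blast
qed

lemma pl_lin: "b \<in> carrier R \<Longrightarrow> pl R k f \<Longrightarrow> pl R (Suc k) (\<lambda>x. (x \<ominus> b) \<otimes> f x)"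
proof (simp only: pl.simps(2), intro ballI)
  fix a assume b: "b \<in> carrier R" and f: "pl R k f" and a: "a \<in> carrier R"
  show "\<exists>g. \<exists>c\<in>carrier R. pl R k g \<and> (\<forall>x\<in>carrier R. (x \<ominus> b) \<otimes> f x = (x \<ominus> a) \<otimes> g x \<oplus> c)"
  proof (cases k)
    case 0
    then obtain d where d: "d \<in> carrier R" "\<forall>x\<in>carrier R. f x = d" using f by auto
    show ?thesis
    proof (intro exI bexI conjI ballI)
      show "pl R k (\<lambda>_. d)" using d by (intro pl_const)
      show "(a \<ominus> b) \<otimes> d \<in> carrier R" using a b d by simp
      fix x assume x: "x \<in> carrier R"
      show "(x \<ominus> b) \<otimes> f x = (x \<ominus> a) \<otimes> d \<oplus> (a \<ominus> b) \<otimes> d"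
        using d x a b by simp algebra
    qed
  next
    case (Suc k')
    obtain g1 c1 where g1: "pl R k' g1" "c1 \<in> carrier R" "\<forall>x\<in>carrier R. f x = (x \<ominus> a) \<otimes> g1 x \<oplus> c1"
      using f a Suc by auto
    show ?thesis
    proof (intro exI bexI conjI ballI)
      have g1k: "pl R k g1" using pl_mono[OF g1(1)] Suc by simp
      show "pl R k (\<lambda>x. f x \<oplus> (a \<ominus> b) \<otimes> g1 x)"
        using a b by (intro pl_add f pl_smult g1k) simp
      show "(a \<ominus> b) \<otimes> c1 \<in> carrier R" using a b g1 by simp
      fix x assume x: "x \<in> carrier R"
      have "g1 x \<in> carrier R" "f x \<in> carrier R" using pl_closed[OF g1(1) x] pl_closed[OF f x] by auto
      then show "(x \<ominus> b) \<otimes> f x = (x \<ominus> a) \<otimes> (f x \<oplus> (a \<ominus> b) \<otimes> g1 x) \<oplus> (a \<ominus> b) \<otimes> c1"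
        using g1(2,3) x a b by (subst (1 2) g1(3)[rule_format, OF x]) algebra
    qed
  qed
qed

lemma pl_finsum:
  assumes "finite S" "\<And>i. i \<in> S \<Longrightarrow> pl R k (f i)"
  shows "pl R k (\<lambda>x. finsum R (\<lambda>i. f i x) S)"
  using assms
proof (induction S rule: finite_induct)
  case empty then show ?case by (simp add: pl_const)
next
  case (insert a S)
  have "pl R k (\<lambda>x. f a x \<oplus> finsum R (\<lambda>i. f i x) S)"
    using insert by (intro pl_add) auto
  then show ?case
  proof (rule pl_cong)
    fix x assume x: "x \<in> carrier R"
    have ps: "\<And>i. i \<in> insert a S \<Longrightarrow> pl R k (f i)" using insert.prems by blast
    have "(\<lambda>i. f i x) \<in> S \<rightarrow> carrier R" "f a x \<in> carrier R"
      using pl_closed[OF ps x] by auto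
    then show "f a x \<oplus> finsum R (\<lambda>i. f i x) S = finsum R (\<lambda>i. f i x) (insert a S)"
      using insert.hyps by (simp add: finsum_insert)
  qed
qed

lemma pl_prod:
  assumes "finite S" "card S \<le> k" "\<And>i. i \<in> S \<Longrightarrow> b i \<in> carrier R" "\<And>i. i \<in> S \<Longrightarrow> d i \<in> carrier R"
  shows "pl R k (\<lambda>x. finprod R (\<lambda>i. (x \<ominus> b i) \<otimes> d i) S)"
  using assms
proof (induction S arbitrary: k rule: finite_induct)
  case empty then show ?case by (simp add: pl_const)
next
  case (insert a S)
  then obtain k' where k: "k = Suc k'" "card S \<le> k'" by (cases k) auto
  have "pl R (Suc k') (\<lambda>x. (x \<ominus> b a) \<otimes> (d a \<otimes> finprod R (\<lambda>i. (x \<ominus> b i) \<otimes> d i) S))"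
    using insert k by (intro pl_lin pl_smult) auto
  moreover have "(x \<ominus> b a) \<otimes> (d a \<otimes> finprod R (\<lambda>i. (x \<ominus> b i) \<otimes> d i) S) =
        finprod R (\<lambda>i. (x \<ominus> b i) \<otimes> d i) (insert a S)" if x: "x \<in> carrier R" for x
  proof -
    have c: "(\<lambda>i. (x \<ominus> b i) \<otimes> d i) \<in> S \<rightarrow> carrier R" "(x \<ominus> b a) \<otimes> d a \<in> carrier R"
      using insert.prems x by auto
    have P: "finprod R (\<lambda>i. (x \<ominus> b i) \<otimes> d i) S \<in> carrier R" using c(1) by (rule finprod_closed)
    have e: "finprod R (\<lambda>i. (x \<ominus> b i) \<otimes> d i) (insert a S) =
        ((x \<ominus> b a) \<otimes> d a) \<otimes> finprod R (\<lambda>i. (x \<ominus> b i) \<otimes> d i) S"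
      by (rule finprod_insert[OF insert.hyps c(1) c(2)])
    have "(x \<ominus> b a) \<otimes> (d a \<otimes> finprod R (\<lambda>i. (x \<ominus> b i) \<otimes> d i) S) =
        ((x \<ominus> b a) \<otimes> d a) \<otimes> finprod R (\<lambda>i. (x \<ominus> b i) \<otimes> d i) S"
      using P x insert.prems by (intro m_assoc[symmetric]) auto
    then show ?thesis using e by simp
  qed
  ultimately show ?case unfolding k(1) by (rule pl_cong)
qed

lemma pl_roots:
  assumes "pl R k f" "P \<subseteq> carrier R" "finite P" "k < card P" "\<And>x. x \<in> P \<Longrightarrow> f x = \<zero>"
    and "y \<in> carrier R"
  shows "f y = \<zero>"
  using assms
proof (induction k arbitrary: f P y)
  case 0
  have "P \<noteq> {}" using 0(4) by auto
  then obtain p where p: "p \<in> P" by blast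
  obtain c where c: "c \<in> carrier R" "\<forall>x\<in>carrier R. f x = c" using 0(1) by auto
  have pc: "p \<in> carrier R" using p 0(2) by blast
  have "f p = \<zero>" using 0(5) p by blast
  then have "c = \<zero>" using c(2) pc by simp
  then show ?case using c(2) 0(6) by simp
next
  case (Suc k)
  have "P \<noteq> {}" using Suc.prems(4) by auto
  then obtain a where aP: "a \<in> P" by blast
  have a: "a \<in> carrier R" using aP Suc.prems(2) by blast
  have "\<forall>a\<in>carrier R. \<exists>g. \<exists>c\<in>carrier R. pl R k g \<and> (\<forall>x\<in>carrier R. f x = (x \<ominus> a) \<otimes> g x \<oplus> c)"
    using Suc.prems(1) by (simp only: pl.simps(2))
  then obtain g c where g: "pl R k g" "c \<in> carrier R" "\<forall>x\<in>carrier R. f x = (x \<ominus> a) \<otimes> g x \<oplus> c"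
    using a by blast
  have ga: "g a \<in> carrier R" using pl_closed[OF g(1) a] by auto
  have "a \<ominus> a = \<zero>" using a by algebra
  then have "f a = c" using g(3) a ga g(2) by simp
  then have c0: "c = \<zero>" using Suc.prems(5)[OF aP] by simp
  have groot: "g x = \<zero>" if "x \<in> P - {a}" for x
  proof -
    have x: "x \<in> carrier R" "x \<noteq> a" using that Suc.prems(2) by auto
    have gx: "g x \<in> carrier R" using pl_closed[OF g(1) x(1)] by auto
    have e1: "f x = (x \<ominus> a) \<otimes> g x \<oplus> c" using g(3) x(1) by blast
    have e2: "(x \<ominus> a) \<otimes> g x \<oplus> c = (x \<ominus> a) \<otimes> g x" using c0 x a gx by simp
    have "f x = \<zero>" using Suc.prems(5) that by blast
    then have "(x \<ominus> a) \<otimes> g x = \<zero>" using e1 e2 by simp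
    moreover have "x \<ominus> a \<noteq> \<zero>" using minus_zero_eq x a by blast
    ultimately show ?thesis using integral_iff[of "x \<ominus> a" "g x"] x a gx by auto
  qed
  have P': "P - {a} \<subseteq> carrier R" "finite (P - {a})" "k < card (P - {a})"
    using Suc.prems(2,3,4) aP by auto
  have gy: "g y = \<zero>"
    by (rule Suc.IH[OF g(1) P'(1) P'(2) P'(3) groot Suc.prems(6)])
  have "f y = (y \<ominus> a) \<otimes> g y \<oplus> c" using g(3) Suc.prems(6) by blast
  then show ?case using Suc.prems(6) gy c0 a by simp
qed

end

lemma sum_all_eq_le:
  fixes f :: "'a \<Rightarrow> nat"
  assumes "finite I" "\<And>i. i \<in> I \<Longrightarrow> f i \<le> c" "card I * c \<le> sum f I" "i \<in> I"
  shows "f i = c"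
proof (rule ccontr)
  assume "f i \<noteq> c"
  then have "f i < c" using assms(2,4) by force
  then have "sum f I < sum (\<lambda>_. c) I"
    using assms by (intro sum_strict_mono_ex1) auto
  then show False using assms(3) by simp
qed

lemma sum_all_eq_ge:
  fixes f :: "'a \<Rightarrow> nat"
  assumes "finite I" "\<And>i. i \<in> I \<Longrightarrow> c \<le> f i" "sum f I \<le> card I * c" "i \<in> I"
  shows "f i = c"
proof (rule ccontr)
  assume "f i \<noteq> c"
  then have "c < f i" using assms(2,4) by force
  then have "sum (\<lambda>_. c) I < sum f I"
    using assms by (intro sum_strict_mono_ex1) auto
  then show False using assms(3) by simp
qed



context nfield
begin

lemma converse:
  assumes fin: "finite (carrier R)" and L: "0 < L" and K: "0 < K" and N: "0 < N" and Nr: "0 < Nr"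
    and NrN: "Nr \<le> N" and dvd: "N dvd K" and M: "M = (K div N) * (N - Nr + 1)"
    and sch: "secure_scheme R K N Nr M L Z T Q \<psi>"
  shows "real Nr \<le> comm_cost N Nr L T"
proof -
  have S1: "\<forall>n\<in>{1..N}. Z n \<subseteq> {1..K} \<and> card (Z n) \<le> M"
    using sch unfolding secure_scheme_def by (elim conjE) assumption
  have S3: "\<forall>n\<in>{1..N}. \<forall>w\<in>msg_space R K L. \<forall>q\<in>set_pmf Q.
        length (\<psi> n w q) = T n \<and> set (\<psi> n w q) \<subseteq> carrier R"
    using sch unfolding secure_scheme_def by (elim conjE) assumption
  have S4: "\<forall>n\<in>{1..N}. \<forall>w\<in>msg_space R K L. \<forall>w'\<in>msg_space R K L. \<forall>q\<in>set_pmf Q.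
        (\<forall>k\<in>Z n. w k = w' k) \<longrightarrow> \<psi> n w q = \<psi> n w' q"
    using sch unfolding secure_scheme_def by (elim conjE) assumption
  have S5: "\<forall>A. A \<subseteq> {1..N} \<and> card A = Nr \<longrightarrow>
        (\<exists>\<phi>. \<forall>w\<in>msg_space R K L. \<forall>q\<in>set_pmf Q.
           \<phi> (\<lambda>n\<in>A. \<psi> n w q) = msg_sum R K L w)"
    using sch unfolding secure_scheme_def by (elim conjE) assumption
  have Zsub: "\<And>n. n \<in> {1..N} \<Longrightarrow> Z n \<subseteq> {1..K}" and ZM: "\<And>n. n \<in> {1..N} \<Longrightarrow> card (Z n) \<le> M"
    using S1 by auto
  have lenT: "\<And>n w q. n \<in> {1..N} \<Longrightarrow> w \<in> msg_space R K L \<Longrightarrow> q \<in> set_pmf Q \<Longrightarrow>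
      length (\<psi> n w q) = T n \<and> set (\<psi> n w q) \<subseteq> carrier R"
    using S3 by blast
  have loc: "\<And>n w w' q. n \<in> {1..N} \<Longrightarrow> w \<in> msg_space R K L \<Longrightarrow> w' \<in> msg_space R K L \<Longrightarrow> q \<in> set_pmf Q \<Longrightarrow>
      (\<forall>k\<in>Z n. w k = w' k) \<Longrightarrow> \<psi> n w q = \<psi> n w' q"
    using S4 by blast
  have dec: "\<And>A. A \<subseteq> {1..N} \<Longrightarrow> card A = Nr \<Longrightarrow> \<exists>\<phi>. \<forall>w\<in>msg_space R K L. \<forall>q\<in>set_pmf Q.
           \<phi> (\<lambda>n\<in>A. \<psi> n w q) = msg_sum R K L w"
    using S5 by blast
  obtain q where q: "q \<in> set_pmf Q" using set_pmf_not_empty[of Q] by blast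
  define VS where "VS = PiE {..<L} (\<lambda>_. carrier R)"
  define w0 where "w0 = (\<lambda>k\<in>{1..K}. \<lambda>l\<in>{..<L}. \<zero>\<^bsub>R\<^esub>)"
  define upd where "upd j v = w0(j := v)" for j and v :: "nat \<Rightarrow> nat"
  have upd_in: "upd j v \<in> msg_space R K L" if "j \<in> {1..K}" "v \<in> VS" for j v
    using that unfolding upd_def w0_def msg_space_def VS_def by (auto simp: PiE_iff extensional_def)
  have sum_upd: "msg_sum R K L (upd j v) = v" if "j \<in> {1..K}" "v \<in> VS" for j v
  proof
    fix l
    show "msg_sum R K L (upd j v) l = v l"
    proof (cases "l < L")
      case True
      have vl: "v l \<in> carrier R" using that(2) True unfolding VS_def by (auto simp: PiE_iff)
      have e: "upd j v k l = (if j = k then v l else \<zero>\<^bsub>R\<^esub>)" if "k \<in> {1..K}" for k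
        using that True by (simp add: upd_def w0_def)
      have "finsum R (\<lambda>k. upd j v k l) {1..K} = finsum R (\<lambda>k. if j = k then v l else \<zero>\<^bsub>R\<^esub>) {1..K}"
        by (rule finsum_cong'[OF refl]) (simp_all add: e vl)
      also have "\<dots> = v l"
        using finsum_singleton[of j "{1..K}" "\<lambda>_. v l"] that(1) vl by simp
      finally show ?thesis using True by (simp add: msg_sum_def)
    next
      case False
      then have lL: "l \<notin> {..<L}" by simp
      have "v l = undefined" using PiE_arb[of v "{..<L}" "\<lambda>_. carrier R" l] that(2) lL unfolding VS_def by blast
      moreover have "msg_sum R K L (upd j v) l = undefined"
        unfolding msg_sum_def by (simp only: restrict_apply lL if_False)
      ultimately show ?thesis by simp
    qed
  qed
  have keyA: "v = v'" if A: "A \<subseteq> {1..N}" "card A = Nr" and j: "j \<in> {1..K}" and v: "v \<in> VS" "v' \<in> VS"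
      and eq: "\<forall>n\<in>A. \<psi> n (upd j v) q = \<psi> n (upd j v') q" for A j v v'
  proof -
    obtain \<phi> where \<phi>: "\<forall>w\<in>msg_space R K L. \<forall>q\<in>set_pmf Q. \<phi> (\<lambda>n\<in>A. \<psi> n w q) = msg_sum R K L w"
      using dec[OF A] by blast
    have "(\<lambda>n\<in>A. \<psi> n (upd j v) q) = (\<lambda>n\<in>A. \<psi> n (upd j v') q)"
      using eq by auto
    then have "msg_sum R K L (upd j v) = msg_sum R K L (upd j v')"
      using \<phi> upd_in[OF j v(1)] upd_in[OF j v(2)] q by metis
    then show ?thesis using sum_upd j v by simp
  qed
  have locj: "\<psi> n (upd j v) q = \<psi> n (upd j v') q"
    if "n \<in> {1..N}" "j \<notin> Z n" "j \<in> {1..K}" "v \<in> VS" "v' \<in> VS" for n j v v'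
    using that by (intro loc[OF that(1) upd_in upd_in q]) (auto simp: upd_def)
  define v0 where "v0 = (\<lambda>l\<in>{..<L}. \<zero>\<^bsub>R\<^esub>)"
  define v1 where "v1 = (\<lambda>l\<in>{..<L}. \<one>\<^bsub>R\<^esub>)"
  have v01: "v0 \<in> VS" "v1 \<in> VS" "v0 \<noteq> v1"
  proof -
    show "v0 \<in> VS" "v1 \<in> VS" by (auto simp: v0_def v1_def VS_def)
    have "v0 0 \<noteq> v1 0" using L by (simp add: v0_def v1_def)
    then show "v0 \<noteq> v1" by metis
  qed
  define NH where "NH j = {n\<in>{1..N}. j \<notin> Z n}" for j
  define HH where "HH j = {n\<in>{1..N}. j \<in> Z n}" for j
  have NHlt: "card (NH j) < Nr" if j: "j \<in> {1..K}" for j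
  proof (rule ccontr)
    assume "\<not> card (NH j) < Nr"
    then obtain A where A: "A \<subseteq> NH j" "card A = Nr"
      by (meson not_less obtain_subset_with_card_n)
    have "A \<subseteq> {1..N}" using A by (auto simp: NH_def)
    then have "v0 = v1"
      using A j v01 by (intro keyA[of A j]) (auto simp: NH_def intro!: locj)
    then show False using v01 by simp
  qed
  have HNH: "card (HH j) + card (NH j) = N" for j
  proof -
    have "HH j \<union> NH j = {1..N}" "HH j \<inter> NH j = {}" by (auto simp: HH_def NH_def)
    then show ?thesis by (metis card_Un_disjoint card_atLeastAtMost diff_Suc_1 finite_Un finite_atLeastAtMost)
  qed
  define c where "c = N - Nr + 1"
  have KNc: "N * M = K * c"
  proof -
    obtain m where m: "K = N * m" using dvd by (elim dvdE)
    then have "K div N = m" using N by simp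
    then show ?thesis using M m by (simp add: c_def algebra_simps)
  qed
  have HHge: "c \<le> card (HH j)" if "j \<in> {1..K}" for j
    using NHlt[OF that] HNH[of j] NrN by (simp add: c_def)
  have dc: "(\<Sum>j\<in>{1..K}. card (HH j)) = (\<Sum>n\<in>{1..N}. card (Z n))"
  proof -
    have "(\<Sum>j\<in>{1..K}. card (HH j)) = (\<Sum>j\<in>{1..K}. \<Sum>n\<in>{1..N}. if j \<in> Z n then 1 else 0)"
      by (intro sum.cong refl) (simp add: HH_def sum.If_cases Int_def conj_commute)
    also have "\<dots> = (\<Sum>n\<in>{1..N}. \<Sum>j\<in>{1..K}. if j \<in> Z n then 1 else 0)"
      by (rule sum.swap)
    also have "\<dots> = (\<Sum>n\<in>{1..N}. card (Z n))"
    proof (intro sum.cong refl)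
      fix n assume n: "n \<in> {1..N}"
      have "{1..K} \<inter> {j. j \<in> Z n} = Z n" using Zsub[OF n] by auto
      then show "(\<Sum>j\<in>{1..K}. if j \<in> Z n then 1 else 0) = card (Z n)"
        by (simp add: sum.If_cases)
    qed
    finally show ?thesis .
  qed
  have sumZle: "(\<Sum>n\<in>{1..N}. card (Z n)) \<le> N * M"
    using sum_mono[of "{1..N}" "\<lambda>n. card (Z n)" "\<lambda>_. M"] ZM by simp
  have sumHge: "K * c \<le> (\<Sum>j\<in>{1..K}. card (HH j))"
    using sum_mono[of "{1..K}" "\<lambda>_. c" "\<lambda>j. card (HH j)"] HHge by simp
  have HHeq: "card (HH j) = c" if "j \<in> {1..K}" for j
    using that HHge sumZle sumHge dc KNc by (intro sum_all_eq_ge[of "{1..K}"]) auto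
  have ZMeq: "card (Z n) = M" if "n \<in> {1..N}" for n
    using that ZM sumZle sumHge dc KNc by (intro sum_all_eq_le[of "{1..N}"]) auto
  have Mpos: "0 < M" using K N NrN dvd M by (auto elim!: dvdE)
  have qge2: "2 \<le> card (carrier R)"
  proof -
    have "{\<zero>\<^bsub>R\<^esub>, \<one>\<^bsub>R\<^esub>} \<subseteq> carrier R" by simp
    then have "card {\<zero>\<^bsub>R\<^esub>, \<one>\<^bsub>R\<^esub>} \<le> card (carrier R)" using fin by (intro card_mono)
    then show ?thesis by simp
  qed
  have Tge: "L \<le> T n" if n: "n \<in> {1..N}" for n
  proof -
    have "Z n \<noteq> {}" using ZMeq[OF n] Mpos by auto
    then obtain j where jZ: "j \<in> Z n" by blast
    then have j: "j \<in> {1..K}" using Zsub[OF n] by auto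
    have nNH: "n \<notin> NH j" using jZ by (simp add: NH_def)
    have cNH: "card (NH j) = Nr - 1" using HNH[of j] HHeq[OF j] NrN by (simp add: c_def)
    define A where "A = insert n (NH j)"
    have A: "A \<subseteq> {1..N}" "card A = Nr"
      using n nNH cNH Nr by (auto simp: A_def NH_def)
    have inj: "inj_on (\<lambda>v. \<psi> n (upd j v) q) VS"
    proof (rule inj_onI)
      fix v v' assume v: "v \<in> VS" "v' \<in> VS" and e: "\<psi> n (upd j v) q = \<psi> n (upd j v') q"
      show "v = v'"
      proof (rule keyA[OF A j v], intro ballI)
        fix m assume "m \<in> A"
        then show "\<psi> m (upd j v) q = \<psi> m (upd j v') q"
          using e v j by (auto simp: A_def NH_def intro!: locj)
      qed
    qed
    have img: "(\<lambda>v. \<psi> n (upd j v) q) ` VS \<subseteq> {xs. set xs \<subseteq> carrier R \<and> length xs = T n}"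
      using lenT[OF n upd_in[OF j] q] by auto
    have "card VS \<le> card {xs. set xs \<subseteq> carrier R \<and> length xs = T n}"
      using card_inj_on_le[OF inj img] fin by (simp add: card_lists_length_eq finite_lists_length_eq)
    then have "card (carrier R) ^ L \<le> card (carrier R) ^ T n"
      using fin by (simp add: VS_def card_PiE card_lists_length_eq)
    moreover have "1 < card (carrier R)" using qge2 by simp
    ultimately show ?thesis using power_le_imp_le_exp by blast
  qed
  define Cs where "Cs = {(\<Sum>n\<in>A. real (T n)) / real L | A. A \<subseteq> {1..N} \<and> card A = Nr}"
  have "Cs = (\<lambda>A. (\<Sum>n\<in>A. real (T n)) / real L) ` {A. A \<subseteq> {1..N} \<and> card A = Nr}"
    by (auto simp: Cs_def)
  then have finC: "finite Cs" by simp
  obtain A0 where A0: "A0 \<subseteq> {1..N}" "card A0 = Nr"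
    using NrN by (metis card_atLeastAtMost diff_Suc_1 obtain_subset_with_card_n)
  have "real Nr \<le> (\<Sum>n\<in>A0. real (T n)) / real L"
  proof -
    have "real Nr * real L = (\<Sum>n\<in>A0. real L)" using A0 by simp
    also have "\<dots> \<le> (\<Sum>n\<in>A0. real (T n))" using A0 Tge by (intro sum_mono) auto
    finally show ?thesis using L by (simp add: field_simps)
  qed
  also have "\<dots> \<le> Max Cs" using finC A0 by (intro Max_ge) (auto simp: Cs_def)
  finally show ?thesis by (simp add: comm_cost_def Cs_def)
qed

end

lemma modinj_le:
  assumes "i \<le> i'" "(a + i) mod (N::nat) = (a + i') mod N" "i' < N"
  shows "i = i'"
proof -
  have "N dvd (a + i') - (a + i)" using mod_eq_dvd_iff_nat[of "a+i" "a+i'" N] assms by simp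
  then have d: "N dvd i' - i" by simp
  show ?thesis
  proof (rule ccontr)
    assume "i \<noteq> i'"
    then have "0 < i' - i" using assms by simp
    then have "N \<le> i' - i" using d by (rule dvd_imp_le[rotated])
    then show False using assms by simp
  qed
qed

lemma modinj: "(a + i) mod (N::nat) = (a + i') mod N \<Longrightarrow> i < N \<Longrightarrow> i' < N \<Longrightarrow> i = i'"
  by (metis modinj_le nat_le_linear)

lemma modback: "a < (N::nat) \<Longrightarrow> i \<le> N \<Longrightarrow> ((a + i) mod N + N - i) mod N = a"
  by (metis (lifting) ext add.commute group_cancel.add2 mod_add_right_eq
    mod_add_self2 mod_less
    ordered_cancel_comm_monoid_diff_class.add_diff_assoc2
    ordered_cancel_comm_monoid_diff_class.add_diff_inverse)

lemma grpfib: "(k - 1) div (m::nat) = j \<Longrightarrow> 0 < m \<Longrightarrow> 1 \<le> k \<Longrightarrow> k \<in> {j*m+1..j*m+m}"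
proof -
  assume a: "(k - 1) div m = j" "0 < m" "1 \<le> k"
  have "k - 1 = j*m + (k-1) mod m" by (metis a(1) div_mult_mod_eq)
  moreover have "(k-1) mod m < m" using a by simp
  ultimately have "j*m+1 \<le> k" "k \<le> j*m+m" using a(3) by linarith+
  then show ?thesis by simp
qed

locale ach = nfield R for R :: "nat ring" (structure) +
  fixes K N Nr L m :: nat and \<beta> :: "nat \<Rightarrow> nat"
  assumes fin: "finite (carrier R)" and Lpos: "0 < L" and Nrpos: "0 < Nr" and NrN: "Nr \<le> N"
    and Km: "K = N * m" and mpos: "0 < m"
    and \<beta>c: "\<And>i. i \<in> {0..N} \<Longrightarrow> \<beta> i \<in> carrier R" and \<beta>inj: "inj_on \<beta> {0..N}"
begin

definition tt where "tt = Nr - 1"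
definition grp :: "nat \<Rightarrow> nat" where "grp k = (k - 1) div m + 1"
definition Tset where "Tset j = (\<lambda>i. (j - 1 + N - i) mod N + 1) ` {1..tt}"
definition Bset where "Bset n = (\<lambda>i. (n - 1 + i) mod N + 1) ` {1..tt}"
definition pj where
  "pj j x = finprod R (\<lambda>i. (x \<ominus>\<^bsub>R\<^esub> \<beta> i) \<otimes>\<^bsub>R\<^esub> inv\<^bsub>R\<^esub> (\<beta> 0 \<ominus>\<^bsub>R\<^esub> \<beta> i)) (Tset j)"
definition Zs where "Zs n = {k \<in> {1..K}. grp k \<notin> Bset n}"
definition Noise where
  "Noise = {z \<in> msg_space R K L. msg_sum R K L z = (\<lambda>l\<in>{..<L}. \<zero>\<^bsub>R\<^esub>)}"
definition Xl where
  "Xl n w z l = finsum R (\<lambda>k. (w k l \<oplus>\<^bsub>R\<^esub> z k l) \<otimes>\<^bsub>R\<^esub> pj (grp k) (\<beta> n)) {1..K}"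
definition psi where "psi n w q = map (Xl n w (from_nat_into Noise q)) [0..<L]"
definition Qd where "Qd = pmf_of_set (to_nat_on Noise ` Noise)"

lemma Npos: "0 < N" using Nrpos NrN by simp
lemma ttN: "tt < N" using Nrpos NrN by (simp add: tt_def)
lemma Nr_tt: "Nr = Suc tt" using Nrpos by (simp add: tt_def)

lemma Bset_sub: "Bset n \<subseteq> {1..N}"
  using Npos by (auto simp: Bset_def Suc_le_eq)
lemma Tset_sub: "Tset j \<subseteq> {1..N}"
  using Npos by (auto simp: Tset_def Suc_le_eq)
lemma card_Tset: "card (Tset j) \<le> tt"
  unfolding Tset_def using card_image_le[of "{1..tt}"] by simp
lemma card_Bset: "card (Bset n) = tt"
proof -
  have "inj_on (\<lambda>i. (n - 1 + i) mod N + 1) {1..tt}"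
  proof (rule inj_onI)
    fix i i' assume i: "i \<in> {1..tt}" "i' \<in> {1..tt}" and e: "(n - 1 + i) mod N + 1 = (n - 1 + i') mod N + 1"
    then show "i = i'" using ttN by (intro modinj[of "n - 1" i N i']) auto
  qed
  then show ?thesis unfolding Bset_def by (simp add: card_image)
qed
lemma Bset_Tset: assumes n: "n \<in> {1..N}" and j: "j \<in> Bset n" shows "n \<in> Tset j"
proof -
  obtain i where i: "i \<in> {1..tt}" and ji: "j = (n - 1 + i) mod N + 1" using j by (auto simp: Bset_def)
  have "(j - 1 + N - i) mod N + 1 = ((n - 1 + i) mod N + N - i) mod N + 1" using ji by simp
  also have "\<dots> = n" using n i ttN by (subst modback) auto
  finally show ?thesis unfolding Tset_def using i by (intro image_eqI[of _ _ i]) auto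
qed

lemma grp_range: "k \<in> {1..K} \<Longrightarrow> grp k \<in> {1..N}"
proof -
  assume k: "k \<in> {1..K}"
  have "k - 1 < N * m" using k Km by auto
  then have "(k - 1) div m < N" by (simp add: less_mult_imp_div_less)
  then show ?thesis by (simp add: grp_def)
qed

lemma card_fib: "card {k\<in>{1..K}. grp k = j} \<le> m"
proof -
  have "{k\<in>{1..K}. grp k = j} \<subseteq> {(j-1)*m+1..(j-1)*m+m}"
  proof
    fix k assume "k \<in> {k\<in>{1..K}. grp k = j}"
    then have k: "k \<in> {1..K}" "(k - 1) div m + 1 = j" by (auto simp: grp_def)
    then have "(k - 1) div m = j - 1" by simp
    then show "k \<in> {(j-1)*m+1..(j-1)*m+m}" using grpfib[of k m "j - 1"] mpos k by auto
  qed
  then have "card {k\<in>{1..K}. grp k = j} \<le> card {(j-1)*m+1..(j-1)*m+m}" by (intro card_mono) auto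
  then show ?thesis by simp
qed

lemma card_Zs: assumes n: "n \<in> {1..N}" shows "card (Zs n) \<le> m * (N - tt)"
proof -
  have sub: "Zs n \<subseteq> (\<Union>j\<in>{1..N} - Bset n. {k\<in>{1..K}. grp k = j})"
    using grp_range by (auto simp: Zs_def)
  have "card (Zs n) \<le> card (\<Union>j\<in>{1..N} - Bset n. {k\<in>{1..K}. grp k = j})"
    by (rule card_mono[OF _ sub]) auto
  also have "\<dots> \<le> (\<Sum>j\<in>{1..N} - Bset n. card {k\<in>{1..K}. grp k = j})"
    by (rule card_UN_le) auto
  also have "\<dots> \<le> (\<Sum>j\<in>{1..N} - Bset n. m)"
    by (intro sum_mono card_fib)
  also have "\<dots> = card ({1..N} - Bset n) * m" by simp
  also have "card ({1..N} - Bset n) = N - tt"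
    using Bset_sub card_Bset by (subst card_Diff_subset) (auto intro: finite_subset)
  finally show ?thesis by (simp add: mult.commute)
qed

lemma \<beta>T: assumes "i \<in> Tset j" shows "\<beta> i \<in> carrier R" "\<beta> 0 \<ominus> \<beta> i \<in> Units R"
proof -
  have i: "i \<in> {1..N}" using assms Tset_sub by blast
  show bi: "\<beta> i \<in> carrier R" using \<beta>c i by simp
  have b0: "\<beta> 0 \<in> carrier R" using \<beta>c by simp
  have "\<beta> 0 \<noteq> \<beta> i" using \<beta>inj i by (auto dest: inj_onD[of \<beta> _ 0 i])
  then have "\<beta> 0 \<ominus> \<beta> i \<noteq> \<zero>" using minus_zero_eq b0 bi by blast
  then show "\<beta> 0 \<ominus> \<beta> i \<in> Units R" using b0 bi field_Units by simp
qed

lemma pj_pl: "pl R tt (pj j)"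
proof -
  have "pl R tt (\<lambda>x. finprod R (\<lambda>i. (x \<ominus> \<beta> i) \<otimes> inv (\<beta> 0 \<ominus> \<beta> i)) (Tset j))"
    using card_Tset \<beta>T by (intro pl_prod) (auto simp: Tset_def)
  then show ?thesis by (simp add: pj_def[abs_def])
qed

lemma pj_closed: "x \<in> carrier R \<Longrightarrow> pj j x \<in> carrier R"
  using pl_closed[OF pj_pl] .

lemma pj_one: "pj j (\<beta> 0) = \<one>"
  unfolding pj_def by (rule finprod_one_eqI) (simp add: \<beta>T)

lemma pj_zero: assumes "n \<in> Tset j" shows "pj j (\<beta> n) = \<zero>"
proof -
  define F where "F = (\<lambda>i. (\<beta> n \<ominus> \<beta> i) \<otimes> inv (\<beta> 0 \<ominus> \<beta> i))"
  have bn: "\<beta> n \<in> carrier R" using \<beta>T(1)[OF assms] .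
  have FP: "F \<in> Tset j - {n} \<rightarrow> carrier R" using \<beta>T bn by (auto simp: F_def)
  have Fn: "F n = \<zero>"
  proof -
    have "\<beta> n \<ominus> \<beta> n = \<zero>" using bn by algebra
    then show ?thesis using \<beta>T[OF assms] by (simp add: F_def)
  qed
  have fT: "finite (Tset j)" by (simp add: Tset_def)
  have "Tset j = insert n (Tset j - {n})" using assms by blast
  then have "pj j (\<beta> n) = finprod R F (insert n (Tset j - {n}))" by (simp add: pj_def F_def)
  also have "\<dots> = F n \<otimes> finprod R F (Tset j - {n})"
    using fT FP Fn by (intro finprod_insert) auto
  also have "\<dots> = \<zero>" using Fn FP by simp
  finally show ?thesis .
qed

end

context ach
begin

lemma ms_mem: "w \<in> msg_space R K L \<Longrightarrow> k \<in> {1..K} \<Longrightarrow> l < L \<Longrightarrow> w k l \<in> carrier R"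
  unfolding msg_space_def by (auto simp: PiE_iff)

lemma ms_ext: "w \<in> msg_space R K L \<Longrightarrow> w \<in> extensional {1..K}"
  unfolding msg_space_def by (auto simp: PiE_iff)

lemma ms_ext2: "w \<in> msg_space R K L \<Longrightarrow> k \<in> {1..K} \<Longrightarrow> w k \<in> extensional {..<L}"
  unfolding msg_space_def by (auto simp: PiE_iff)

lemma ms_intro: "(\<And>k l. k \<in> {1..K} \<Longrightarrow> l < L \<Longrightarrow> f k l \<in> carrier R) \<Longrightarrow>
   (\<lambda>k\<in>{1..K}. \<lambda>l\<in>{..<L}. f k l) \<in> msg_space R K L"
  unfolding msg_space_def by (auto simp: PiE_iff)

lemma msum_app: "l < L \<Longrightarrow> msg_sum R K L w l = finsum R (\<lambda>k. w k l) {1..K}"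
  by (simp add: msg_sum_def)

lemma msum_closed: "w \<in> msg_space R K L \<Longrightarrow> l < L \<Longrightarrow> msg_sum R K L w l \<in> carrier R"
  using ms_mem by (simp add: msum_app)

lemma msum_eqI:
  assumes "\<And>l. l < L \<Longrightarrow> msg_sum R K L w l = msg_sum R K L w' l"
  shows "msg_sum R K L w = msg_sum R K L w'"
proof
  fix l show "msg_sum R K L w l = msg_sum R K L w' l"
    using assms by (cases "l < L") (simp_all add: msg_sum_def)
qed

lemma fin_ms: "finite (msg_space R K L)"
  unfolding msg_space_def using fin by (intro finite_PiE) auto

definition z0 where "z0 = (\<lambda>k\<in>{1..K}. \<lambda>l\<in>{..<L}. \<zero>\<^bsub>R\<^esub>)"

lemma z0_Noise: "z0 \<in> Noise"
proof -
  have "z0 \<in> msg_space R K L" unfolding z0_def by (rule ms_intro) simp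
  moreover have "msg_sum R K L z0 = (\<lambda>l\<in>{..<L}. \<zero>)"
  proof
    fix l show "msg_sum R K L z0 l = (\<lambda>l\<in>{..<L}. \<zero>) l"
    proof (cases "l < L")
      case True
      have "finsum R (\<lambda>k. z0 k l) {1..K} = finsum R (\<lambda>k. \<zero>) {1..K}"
        using True by (intro finsum_cong') (auto simp: z0_def)
      then show ?thesis using True by (simp add: msum_app)
    qed (simp add: msg_sum_def)
  qed
  ultimately show ?thesis by (simp add: Noise_def)
qed

lemma Noise_sub: "Noise \<subseteq> msg_space R K L" by (auto simp: Noise_def)
lemma fin_Noise: "finite Noise" using fin_ms Noise_sub by (rule finite_subset[rotated])
lemma Noise_ne: "Noise \<noteq> {}" using z0_Noise by blast
lemma cnt_Noise: "countable Noise" using fin_Noise by (rule countable_finite)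

lemma Noise_sum: "z \<in> Noise \<Longrightarrow> l < L \<Longrightarrow> finsum R (\<lambda>k. z k l) {1..K} = \<zero>"
proof -
  assume z: "z \<in> Noise" and l: "l < L"
  have "msg_sum R K L z l = \<zero>" using z l by (simp add: Noise_def)
  then show ?thesis using l by (simp add: msum_app)
qed

lemma set_Qd: "set_pmf Qd = to_nat_on Noise ` Noise"
  unfolding Qd_def using fin_Noise Noise_ne by (simp add: set_pmf_of_set)

lemma dec_Noise: "q \<in> set_pmf Qd \<Longrightarrow> from_nat_into Noise q \<in> Noise"
  using set_Qd cnt_Noise by auto

lemma Xl_closed:
  assumes "w \<in> msg_space R K L" "z \<in> msg_space R K L" "l < L" "n \<in> {1..N}"
  shows "Xl n w z l \<in> carrier R"
proof -
  have "\<beta> n \<in> carrier R" using \<beta>c assms(4) by simp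
  then show ?thesis unfolding Xl_def using assms ms_mem pj_closed
    by (intro finsum_closed) (auto intro!: Pi_I)
qed

lemma Xl_local:
  assumes w: "w \<in> msg_space R K L" "w' \<in> msg_space R K L" and z: "z \<in> msg_space R K L"
    and l: "l < L" and n: "n \<in> {1..N}" and agree: "\<forall>k\<in>Zs n. w k = w' k"
  shows "Xl n w z l = Xl n w' z l"
  unfolding Xl_def
proof (rule finsum_cong')
  show "{1..K} = {1..K}" ..
  have bn: "\<beta> n \<in> carrier R" using \<beta>c n by simp
  show "(\<lambda>k. (w' k l \<oplus> z k l) \<otimes> pj (grp k) (\<beta> n)) \<in> {1..K} \<rightarrow> carrier R"
    using w z l bn ms_mem pj_closed by (auto intro!: Pi_I)
  fix k assume k: "k \<in> {1..K}"
  show "(w k l \<oplus> z k l) \<otimes> pj (grp k) (\<beta> n) = (w' k l \<oplus> z k l) \<otimes> pj (grp k) (\<beta> n)"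
  proof (cases "k \<in> Zs n")
    case True then show ?thesis using agree by simp
  next
    case False
    then have "grp k \<in> Bset n" using k by (simp add: Zs_def)
    then have "n \<in> Tset (grp k)" using Bset_Tset n by blast
    then have "pj (grp k) (\<beta> n) = \<zero>" by (rule pj_zero)
    then show ?thesis using ms_mem[OF w(1) k l] ms_mem[OF w(2) k l] ms_mem[OF z k l] by simp
  qed
qed

end

context ach
begin

lemma add_eq_self: "a \<in> carrier R \<Longrightarrow> b \<in> carrier R \<Longrightarrow> a \<oplus> b = b \<Longrightarrow> a = \<zero>"
proof -
  assume ab: "a \<in> carrier R" "b \<in> carrier R" and e: "a \<oplus> b = b"
  have "a = (a \<oplus> b) \<ominus> b" using ab by algebra
  also have "\<dots> = b \<ominus> b" using e by simp
  also have "\<dots> = \<zero>" using ab by algebra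
  finally show ?thesis .
qed

lemma decode_unique:
  assumes A: "A \<subseteq> {1..N}" "card A = Nr"
    and w: "w \<in> msg_space R K L" "w' \<in> msg_space R K L" and z: "z \<in> Noise" "z' \<in> Noise"
    and eq: "\<And>n l. n \<in> A \<Longrightarrow> l < L \<Longrightarrow> Xl n w z l = Xl n w' z' l"
  shows "msg_sum R K L w = msg_sum R K L w'"
proof (rule msum_eqI)
  fix l assume l: "l < L"
  have zm: "z \<in> msg_space R K L" "z' \<in> msg_space R K L" using z Noise_sub by auto
  define a where "a k = w k l \<oplus> z k l" for k
  define a' where "a' k = w' k l \<oplus> z' k l" for k
  have ac: "a k \<in> carrier R" "a' k \<in> carrier R" if "k \<in> {1..K}" for k
    using ms_mem[OF w(1) that l] ms_mem[OF w(2) that l] ms_mem[OF zm(1) that l] ms_mem[OF zm(2) that l]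
    by (auto simp: a_def a'_def)
  define F where "F x = finsum R (\<lambda>k. a k \<otimes> pj (grp k) x) {1..K}" for x
  define F' where "F' x = finsum R (\<lambda>k. a' k \<otimes> pj (grp k) x) {1..K}" for x
  have plF: "pl R tt F" unfolding F_def
    using ac by (intro pl_finsum pl_smult pj_pl) auto
  have plF': "pl R tt F'" unfolding F'_def
    using ac by (intro pl_finsum pl_smult pj_pl) auto
  have plD: "pl R tt (\<lambda>x. F x \<ominus> F' x)" using plF plF' by (rule pl_sub)
  have b0: "\<beta> 0 \<in> carrier R" using \<beta>c by simp
  have FX: "F (\<beta> n) = Xl n w z l" "F' (\<beta> n) = Xl n w' z' l" for n
    by (simp_all add: F_def F'_def Xl_def a_def a'_def)
  have D0: "F x \<ominus> F' x = \<zero>" if xA: "x \<in> \<beta> ` A" for x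
  proof -
    obtain n where n: "n \<in> A" "x = \<beta> n" using xA by blast
    have "F x = F' x" using eq[OF n(1) l] n(2) FX by simp
    moreover have "F' x \<in> carrier R" using pl_closed[OF plF'] \<beta>c n A by auto
    ultimately show ?thesis by (simp add: minus_eq r_neg)
  qed
  have injA: "inj_on \<beta> A" using \<beta>inj A(1) by (rule inj_on_subset[OF _ subset_trans]) auto
  have "F (\<beta> 0) \<ominus> F' (\<beta> 0) = \<zero>"
  proof (rule pl_roots[OF plD _ _ _ D0 b0])
    show "\<beta> ` A \<subseteq> carrier R" using \<beta>c A by auto
    show "finite (\<beta> ` A)" using A by (auto intro: finite_subset)
    show "tt < card (\<beta> ` A)" using card_image[OF injA] A Nr_tt by simp
  qed
  then have FF: "F (\<beta> 0) = F' (\<beta> 0)"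
    using minus_zero_eq pl_closed[OF plF b0] pl_closed[OF plF' b0] by blast
  have F0: "F (\<beta> 0) = finsum R a {1..K}" "F' (\<beta> 0) = finsum R a' {1..K}"
    unfolding F_def F'_def pj_one using ac by (auto intro!: finsum_cong')
  have Sa: "finsum R a {1..K} = msg_sum R K L w l"
  proof -
    have "finsum R a {1..K} = finsum R (\<lambda>k. w k l) {1..K} \<oplus> finsum R (\<lambda>k. z k l) {1..K}"
      unfolding a_def using ms_mem[OF w(1) _ l] ms_mem[OF zm(1) _ l] by (intro finsum_addf) auto
    then show ?thesis using Noise_sum[OF z(1) l] msum_closed[OF w(1) l] l by (simp add: msum_app)
  qed
  have Sa': "finsum R a' {1..K} = msg_sum R K L w' l"
  proof -
    have "finsum R a' {1..K} = finsum R (\<lambda>k. w' k l) {1..K} \<oplus> finsum R (\<lambda>k. z' k l) {1..K}"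
      unfolding a'_def using ms_mem[OF w(2) _ l] ms_mem[OF zm(2) _ l] by (intro finsum_addf) auto
    then show ?thesis using Noise_sum[OF z(2) l] msum_closed[OF w(2) l] l by (simp add: msum_app)
  qed
  show "msg_sum R K L w l = msg_sum R K L w' l" using FF F0 Sa Sa' by simp
qed

definition shift where
  "shift u v z = (\<lambda>k\<in>{1..K}. \<lambda>l\<in>{..<L}. z k l \<oplus>\<^bsub>R\<^esub> u k l \<ominus>\<^bsub>R\<^esub> v k l)"

lemma shift_Noise:
  assumes u: "u \<in> msg_space R K L" and v: "v \<in> msg_space R K L" and s: "msg_sum R K L u = msg_sum R K L v"
    and z: "z \<in> Noise"
  shows "shift u v z \<in> Noise"
proof -
  have zm: "z \<in> msg_space R K L" using z Noise_sub by auto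
  have sm: "shift u v z \<in> msg_space R K L"
    unfolding shift_def using ms_mem[OF zm] ms_mem[OF u] ms_mem[OF v] by (intro ms_intro) auto
  have "msg_sum R K L (shift u v z) = (\<lambda>l\<in>{..<L}. \<zero>)"
  proof (rule ext)
    fix l show "msg_sum R K L (shift u v z) l = (\<lambda>l\<in>{..<L}. \<zero>) l"
    proof (cases "l < L")
      case l: True
      define s where "s = finsum R (\<lambda>k. shift u v z k l) {1..K}"
      have sc: "s \<in> carrier R" unfolding s_def using ms_mem[OF sm _ l] by (intro finsum_closed) auto
      have "s \<oplus> finsum R (\<lambda>k. v k l) {1..K} = finsum R (\<lambda>k. shift u v z k l \<oplus> v k l) {1..K}"
        unfolding s_def using ms_mem[OF sm _ l] ms_mem[OF v _ l] by (intro finsum_addf[symmetric]) auto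
      also have "\<dots> = finsum R (\<lambda>k. z k l \<oplus> u k l) {1..K}"
      proof (rule finsum_cong')
        show "(\<lambda>k. z k l \<oplus> u k l) \<in> {1..K} \<rightarrow> carrier R" using ms_mem[OF zm _ l] ms_mem[OF u _ l] by auto
        fix k assume k: "k \<in> {1..K}"
        have c: "z k l \<in> carrier R" "u k l \<in> carrier R" "v k l \<in> carrier R"
          using ms_mem[OF zm k l] ms_mem[OF u k l] ms_mem[OF v k l] by auto
        have "shift u v z k l = z k l \<oplus> u k l \<ominus> v k l" using k l by (simp add: shift_def)
        then show "shift u v z k l \<oplus> v k l = z k l \<oplus> u k l" using c by simp algebra
      qed simp
      also have "\<dots> = finsum R (\<lambda>k. z k l) {1..K} \<oplus> finsum R (\<lambda>k. u k l) {1..K}"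
        using ms_mem[OF zm _ l] ms_mem[OF u _ l] by (intro finsum_addf) auto
      also have "\<dots> = finsum R (\<lambda>k. v k l) {1..K}"
      proof -
        have suv: "finsum R (\<lambda>k. u k l) {1..K} = finsum R (\<lambda>k. v k l) {1..K}"
          using fun_cong[OF s, of l] l by (simp add: msum_app)
        have "finsum R (\<lambda>k. u k l) {1..K} \<in> carrier R" using msum_closed[OF u l] l by (simp add: msum_app)
        then show ?thesis using Noise_sum[OF z l] suv by simp
      qed
      finally have "s = \<zero>" using sc msum_closed[OF v l] l by (intro add_eq_self) (auto simp: msum_app)
      then show ?thesis using l by (simp add: msum_app s_def)
    qed (simp add: msg_sum_def)
  qed
  then show ?thesis using sm by (simp add: Noise_def)
qed

lemma shift_inv:
  assumes u: "u \<in> msg_space R K L" and v: "v \<in> msg_space R K L" and z: "z \<in> msg_space R K L"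
  shows "shift v u (shift u v z) = z"
proof (rule ext)
  fix k show "shift v u (shift u v z) k = z k"
  proof (cases "k \<in> {1..K}")
    case k: True
    show ?thesis
    proof (rule ext)
      fix l show "shift v u (shift u v z) k l = z k l"
      proof (cases "l < L")
        case l: True
        have c: "z k l \<in> carrier R" "u k l \<in> carrier R" "v k l \<in> carrier R"
          using ms_mem[OF z k l] ms_mem[OF u k l] ms_mem[OF v k l] by auto
        have "shift v u (shift u v z) k l = (z k l \<oplus> u k l \<ominus> v k l) \<oplus> v k l \<ominus> u k l"
          using k l by (simp add: shift_def)
        also have "\<dots> = z k l" using c by algebra
        finally show ?thesis .
      next
        case False
        then have lL: "l \<notin> {..<L}" by simp
        have "shift v u (shift u v z) k l = undefined" unfolding shift_def
          by (simp only: restrict_apply k lL if_False if_True)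
        moreover have "z k l = undefined" using ms_ext2[OF z k] lL by (simp add: extensional_def)
        ultimately show ?thesis by simp
      qed
    qed
  next
    case False
    have "shift v u (shift u v z) k = undefined" unfolding shift_def by (simp only: restrict_apply False if_False)
    moreover have "z k = undefined" using ms_ext[OF z] False by (simp add: extensional_def)
    ultimately show ?thesis by simp
  qed
qed

definition Yv where "Yv w z = (\<lambda>n\<in>{1..N}. map (Xl n w z) [0..<L])"

lemma Y_shift:
  assumes w: "w \<in> msg_space R K L" "w' \<in> msg_space R K L" and z: "z \<in> msg_space R K L"
  shows "Yv w' (shift w w' z) = Yv w z"
  unfolding Yv_def
proof (intro restrict_ext map_cong refl)
  fix n l assume n: "n \<in> {1..N}" and "l \<in> set [0..<L]"
  then have l: "l < L" by simp
  have bn: "\<beta> n \<in> carrier R" using \<beta>c n by simp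
  show "Xl n w' (shift w w' z) l = Xl n w z l"
    unfolding Xl_def
  proof (rule finsum_cong')
    show "(\<lambda>k. (w k l \<oplus> z k l) \<otimes> pj (grp k) (\<beta> n)) \<in> {1..K} \<rightarrow> carrier R"
      using ms_mem[OF w(1) _ l] ms_mem[OF z _ l] pj_closed[OF bn] by auto
    fix k assume k: "k \<in> {1..K}"
    have c: "z k l \<in> carrier R" "w k l \<in> carrier R" "w' k l \<in> carrier R"
      using ms_mem[OF z k l] ms_mem[OF w(1) k l] ms_mem[OF w(2) k l] by auto
    have "w' k l \<oplus> shift w w' z k l = w' k l \<oplus> (z k l \<oplus> w k l \<ominus> w' k l)"
      using k l by (simp add: shift_def)
    also have "\<dots> = w k l \<oplus> z k l" using c by algebra
    finally show "(w' k l \<oplus> shift w w' z k l) \<otimes> pj (grp k) (\<beta> n) = (w k l \<oplus> z k l) \<otimes> pj (grp k) (\<beta> n)"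
      by simp
  qed simp
qed

end

context ach
begin

lemma Qd_map: "Qd = map_pmf (to_nat_on Noise) (pmf_of_set Noise)"
  unfolding Qd_def using fin_Noise Noise_ne cnt_Noise
  by (intro map_pmf_of_set_inj[symmetric]) auto

lemma X_Y: "map_pmf (\<lambda>q. (\<lambda>n\<in>{1..N}. psi n w q)) Qd = map_pmf (Yv w) (pmf_of_set Noise)"
  unfolding Qd_map map_pmf_comp
proof (rule map_pmf_cong[OF refl])
  fix z assume "z \<in> set_pmf (pmf_of_set Noise)"
  then have z: "z \<in> Noise" using fin_Noise Noise_ne by simp
  have "from_nat_into Noise (to_nat_on Noise z) = z" using cnt_Noise z by simp
  then show "(\<lambda>n\<in>{1..N}. psi n w (to_nat_on Noise z)) = Yv w z"
    by (simp add: psi_def Yv_def)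
qed

lemma Y_eq:
  assumes w: "w \<in> msg_space R K L" "w' \<in> msg_space R K L" and s: "msg_sum R K L w = msg_sum R K L w'"
  shows "map_pmf (Yv w) (pmf_of_set Noise) = map_pmf (Yv w') (pmf_of_set Noise)"
proof -
  have bij: "bij_betw (shift w w') Noise Noise"
  proof (rule bij_betw_byWitness[where f' = "shift w' w"])
    show "\<forall>a\<in>Noise. shift w' w (shift w w' a) = a" using shift_inv w Noise_sub by blast
    show "\<forall>a\<in>Noise. shift w w' (shift w' w a) = a" using shift_inv w Noise_sub by blast
    show "shift w w' ` Noise \<subseteq> Noise" using shift_Noise[OF w(1) w(2) s] by blast
    show "shift w' w ` Noise \<subseteq> Noise" using shift_Noise[OF w(2) w(1) s[symmetric]] by blast
  qed
  have "map_pmf (Yv w) (pmf_of_set Noise) = map_pmf (\<lambda>z. Yv w' (shift w w' z)) (pmf_of_set Noise)"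
  proof (rule map_pmf_cong[OF refl])
    fix z assume "z \<in> set_pmf (pmf_of_set Noise)"
    then have z: "z \<in> msg_space R K L" using fin_Noise Noise_ne Noise_sub by auto
    show "Yv w z = Yv w' (shift w w' z)" using Y_shift[OF w z] by simp
  qed
  also have "\<dots> = map_pmf (Yv w') (map_pmf (shift w w') (pmf_of_set Noise))"
    by (simp add: map_pmf_comp)
  also have "map_pmf (shift w w') (pmf_of_set Noise) = pmf_of_set Noise"
    by (rule map_pmf_of_set_bij_betw[OF bij Noise_ne fin_Noise])
  finally show ?thesis .
qed

lemma scheme: "secure_scheme R K N Nr (m * (N - tt)) L Zs (\<lambda>_. L) Qd psi"
  unfolding secure_scheme_def
proof (intro conjI)
  show "\<forall>n\<in>{1..N}. Zs n \<subseteq> {1..K} \<and> card (Zs n) \<le> m * (N - tt)"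
    using card_Zs by (auto simp: Zs_def)
  show "finite (set_pmf Qd)" using set_Qd fin_Noise by simp
  show "\<forall>n\<in>{1..N}. \<forall>w\<in>msg_space R K L. \<forall>q\<in>set_pmf Qd. length (psi n w q) = L \<and> set (psi n w q) \<subseteq> carrier R"
  proof (intro ballI conjI)
    fix n w q assume n: "n \<in> {1..N}" and w: "w \<in> msg_space R K L" and q: "q \<in> set_pmf Qd"
    show "length (psi n w q) = L" by (simp add: psi_def)
    have z: "from_nat_into Noise q \<in> msg_space R K L" using dec_Noise[OF q] Noise_sub by auto
    show "set (psi n w q) \<subseteq> carrier R" using Xl_closed[OF w z _ n] by (auto simp: psi_def)
  qed
  show "\<forall>n\<in>{1..N}. \<forall>w\<in>msg_space R K L. \<forall>w'\<in>msg_space R K L. \<forall>q\<in>set_pmf Qd.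
        (\<forall>k\<in>Zs n. w k = w' k) \<longrightarrow> psi n w q = psi n w' q"
  proof (intro ballI impI)
    fix n w w' q assume n: "n \<in> {1..N}" and w: "w \<in> msg_space R K L" "w' \<in> msg_space R K L"
      and q: "q \<in> set_pmf Qd" and ag: "\<forall>k\<in>Zs n. w k = w' k"
    have z: "from_nat_into Noise q \<in> msg_space R K L" using dec_Noise[OF q] Noise_sub by auto
    show "psi n w q = psi n w' q" unfolding psi_def
      using Xl_local[OF w z _ n ag] by (intro map_cong) auto
  qed
  show "\<forall>A. A \<subseteq> {1..N} \<and> card A = Nr \<longrightarrow>
        (\<exists>\<phi>. \<forall>w\<in>msg_space R K L. \<forall>q\<in>set_pmf Qd. \<phi> (\<lambda>n\<in>A. psi n w q) = msg_sum R K L w)"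
  proof (intro allI impI)
    fix A assume A: "A \<subseteq> {1..N} \<and> card A = Nr"
    define P where "P Y s = (\<exists>w\<in>msg_space R K L. \<exists>q\<in>set_pmf Qd. Y = (\<lambda>n\<in>A. psi n w q) \<and> s = msg_sum R K L w)" for Y s
    show "\<exists>\<phi>. \<forall>w\<in>msg_space R K L. \<forall>q\<in>set_pmf Qd. \<phi> (\<lambda>n\<in>A. psi n w q) = msg_sum R K L w"
    proof (intro exI ballI)
      fix w q assume w: "w \<in> msg_space R K L" and q: "q \<in> set_pmf Qd"
      show "(SOME s. P (\<lambda>n\<in>A. psi n w q) s) = msg_sum R K L w"
      proof (rule some_equality)
        show "P (\<lambda>n\<in>A. psi n w q) (msg_sum R K L w)" using w q by (auto simp: P_def)
        fix s assume "P (\<lambda>n\<in>A. psi n w q) s"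
        then obtain w' q' where w': "w' \<in> msg_space R K L" and q': "q' \<in> set_pmf Qd"
          and e: "(\<lambda>n\<in>A. psi n w q) = (\<lambda>n\<in>A. psi n w' q')" and s: "s = msg_sum R K L w'"
          unfolding P_def by blast
        have "msg_sum R K L w' = msg_sum R K L w"
        proof (rule decode_unique[of A])
          show "A \<subseteq> {1..N}" "card A = Nr" using A by auto
          show "w' \<in> msg_space R K L" "w \<in> msg_space R K L" by fact+
          show "from_nat_into Noise q' \<in> Noise" "from_nat_into Noise q \<in> Noise"
            using dec_Noise q q' by auto
          fix n l assume n: "n \<in> A" and l: "l < L"
          have "psi n w' q' = psi n w q" using fun_cong[OF e, of n] n by simp
          then have "map (Xl n w' (from_nat_into Noise q')) [0..<L] = map (Xl n w (from_nat_into Noise q)) [0..<L]"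
            by (simp add: psi_def)
          then show "Xl n w' (from_nat_into Noise q') l = Xl n w (from_nat_into Noise q) l"
            using l by (simp add: map_eq_conv)
        qed
        then show "s = msg_sum R K L w" using s by simp
      qed
    qed
  qed
  show "cond_mutual_info
     (map_pmf (\<lambda>(w, q). (w, \<lambda>n\<in>{1..N}. psi n w q, msg_sum R K L w))
       (pair_pmf (pmf_of_set (msg_space R K L)) Qd)) = 0"
  proof (rule sec_general[where X = "\<lambda>w q. (\<lambda>n\<in>{1..N}. psi n w q)"])
    show "finite (msg_space R K L)" by (rule fin_ms)
    show "msg_space R K L \<noteq> {}" using z0_Noise Noise_sub by blast
    show "finite (set_pmf Qd)" using set_Qd fin_Noise by simp
    fix w w' assume w: "w \<in> msg_space R K L" "w' \<in> msg_space R K L" and s: "msg_sum R K L w = msg_sum R K L w'"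
    show "map_pmf (\<lambda>q. (\<lambda>n\<in>{1..N}. psi n w q)) Qd = map_pmf (\<lambda>q. (\<lambda>n\<in>{1..N}. psi n w' q)) Qd"
      unfolding X_Y using Y_eq[OF w s] .
  qed
qed

lemma cost: "comm_cost N Nr L (\<lambda>_. L) = real Nr"
proof -
  obtain A0 where A0: "A0 \<subseteq> {1..N}" "card A0 = Nr"
    using NrN by (metis card_atLeastAtMost diff_Suc_1 obtain_subset_with_card_n)
  have "{(\<Sum>n\<in>A. real L) / real L | A. A \<subseteq> {1..N} \<and> card A = Nr} = {real Nr}"
    using A0 Lpos by auto
  then show ?thesis by (simp add: comm_cost_def)
qed

end

theorem theorem1:
  fixes K N Nr M :: nat
  assumes "0 < K" "0 < N" "0 < Nr" "0 < M"
    and "Nr \<le> N" and "N dvd K"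
    and "M = (K div N) * (N - Nr + 1)"
  shows "\<exists>q0::nat. \<forall>R :: nat ring.
           field R \<and> finite (carrier R) \<and> q0 \<le> card (carrier R) \<longrightarrow>
           (\<forall>L::nat. 0 < L \<longrightarrow> real Nr \<in> achievable_costs R K N Nr M L \<and>
                (\<forall>r\<in>achievable_costs R K N Nr M L. real Nr \<le> r))"
proof (intro exI[of _ "N + 1"] allI impI conjI ballI)
  fix R :: "nat ring" and L :: nat
  assume RR: "field R \<and> finite (carrier R) \<and> N + 1 \<le> card (carrier R)" and L: "0 < L"
  interpret nfield R using RR by (simp add: nfield_def)
  have fin: "finite (carrier R)" using RR by simp
  show "\<And>r. r \<in> achievable_costs R K N Nr M L \<Longrightarrow> real Nr \<le> r"
  proof -
    fix r assume "r \<in> achievable_costs R K N Nr M L"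
    then obtain Z T Q \<psi> where r: "r = comm_cost N Nr L T" and sch: "secure_scheme R K N Nr M L Z T Q \<psi>"
      unfolding achievable_costs_def by blast
    show "real Nr \<le> r" unfolding r using converse[OF fin L assms(1,2,3,5,6,7) sch] .
  qed
  have "card {0..N} \<le> card (carrier R)" using RR by simp
  then obtain \<beta> where \<beta>: "\<beta> ` {0..N} \<subseteq> carrier R" "inj_on \<beta> {0..N}"
    using card_le_inj[of "{0..N}" "carrier R"] fin by auto
  define m where "m = K div N"
  have Km: "K = N * m" using assms(6) by (simp add: m_def)
  have mpos: "0 < m" using assms(1,2) Km by (cases m) auto
  interpret ach R K N Nr L m \<beta>
    using fin L assms(3,5) Km mpos \<beta> by unfold_locales auto
  have M: "M = m * (N - tt)" using assms(3,5,7) by (simp add: m_def tt_def Suc_diff_le)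
  show "real Nr \<in> achievable_costs R K N Nr M L"
    unfolding achievable_costs_def M using scheme cost by force
qed


end
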